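(* Let $B\subset\mathbb R^n$ be an $n$-dimensional (closed) ball and, for $i=1,\ldots,n+1$, let $f_i$ be a set-valued map assigning to each $x\in B$ a nonempty subset $f_i(x)\subseteq B$, such that the graph $\{(x,y)\in B\times B: y\in f_i(x)\}$ is closed in $B\times B$. Then there exists $x\in B$ with $x\in f_1(x)*f_2(x)*\cdots*f_{n+1}(x)$.
   Context: For subsets $A_1,\ldots,A_m$ of $\mathbb R^n$, the geometric join $A_1*\cdots*A_m$ is the set of all convex combinations $t_1a_1+\cdots+t_ma_m$ with $a_i\in A_i$, $t_i\ge0$, $\sum_i t_i=1$. *)

theory Defs
  imports "HOL-Analysis.Analysis"
begin

definition geom_join :: "'i set \<Rightarrow> ('i \<Rightarrow> 'a::real_vector set) \<Rightarrow> 'a set" where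
  "geom_join I A = {y. \<exists>t a. (\<forall>i\<in>I. 0 \<le> t i \<and> a i \<in> A i) \<and> sum t I = 1 \<and>
                          y = (\<Sum>i\<in>I. t i *\<^sub>R a i)}"

end

theory Submission imports Defs begin

definition inS :: "real \<Rightarrow> ('n::finite \<Rightarrow> int) \<Rightarrow> real^'n \<Rightarrow> bool" where
 "inS e v x \<longleftrightarrow> (\<forall>j. \<bar>x$j/e - v j\<bar> < 1) \<and> (\<forall>j k. \<bar>(x$j/e - v j) - (x$k/e - v k)\<bar> < 1)"

definition phi :: "real \<Rightarrow> ('n::finite \<Rightarrow> int) \<Rightarrow> real^'n \<Rightarrow> real" where
 "phi e v x = (\<Prod>j\<in>UNIV. max 0 (1 - \<bar>x$j/e - v j\<bar>)) *
    (\<Prod>jk\<in>UNIV. max 0 (1 - \<bar>(x$fst jk/e - v (fst jk)) - (x$snd jk/e - v (snd jk))\<bar>))"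

definition col :: "('n::finite \<Rightarrow> int) \<Rightarrow> nat" where
 "col v = nat ((\<Sum>j\<in>UNIV. v j) mod int (CARD('n)+1)) + 1"

lemma phi_nonneg: "0 \<le> phi e v x"
  unfolding phi_def by (intro mult_nonneg_nonneg prod_nonneg) auto

lemma phi_pos: "0 < phi e v x \<longleftrightarrow> inS e v x"
proof -
  have mx: "\<And>t::real. (max 0 (1 - t) = 0) \<longleftrightarrow> 1 \<le> t" by (auto simp: max_def)
  have "phi e v x \<noteq> 0 \<longleftrightarrow> inS e v x"
    unfolding phi_def inS_def by (auto simp: prod_zero_iff mx not_le)
  then show ?thesis using phi_nonneg[of e v x] by linarith
qed

lemma col_range: "col (v::'n::finite \<Rightarrow> int) \<in> {1..CARD('n)+1}"
proof -
  have "(\<Sum>j\<in>UNIV. v j) mod int (CARD('n)+1) < int (CARD('n)+1)" by simp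
  then have "nat ((\<Sum>j\<in>UNIV. v j) mod int (CARD('n)+1)) \<le> CARD('n)"
    by (subst nat_le_iff) linarith
  then show ?thesis unfolding col_def by auto
qed

lemma inS_floor: "e > 0 \<Longrightarrow> inS e (\<lambda>j. \<lfloor>x$j/e\<rfloor>) x"
  unfolding inS_def
proof (intro conjI allI)
  fix j k
  have a: "0 \<le> x$j/e - \<lfloor>x$j/e\<rfloor>" "x$j/e - \<lfloor>x$j/e\<rfloor> < 1" by linarith+
  have b: "0 \<le> x$k/e - \<lfloor>x$k/e\<rfloor>" "x$k/e - \<lfloor>x$k/e\<rfloor> < 1" by linarith+
  show "\<bar>x$j/e - \<lfloor>x$j/e\<rfloor>\<bar> < 1" using a by linarith
  show "\<bar>(x$j/e - \<lfloor>x$j/e\<rfloor>) - (x$k/e - \<lfloor>x$k/e\<rfloor>)\<bar> < 1" using a b by linarith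
qed

lemma inS_unique:
  fixes v w :: "'n::finite \<Rightarrow> int"
  assumes v: "inS e v x" and w: "inS e w x" and c: "col v = col w"
  shows "v = w"
proof -
  define d where "d j = v j - w j" for j
  have d1: "\<bar>d j\<bar> \<le> 1" for j
  proof -
    have "\<bar>x$j/e - v j\<bar> < 1" "\<bar>x$j/e - w j\<bar> < 1" using v w unfolding inS_def by auto
    then have "\<bar>real_of_int (d j)\<bar> < 2" unfolding d_def by linarith
    then show ?thesis by linarith
  qed
  have d2: "\<bar>d j - d k\<bar> \<le> 1" for j k
  proof -
    have "\<bar>(x$j/e - v j) - (x$k/e - v k)\<bar> < 1" "\<bar>(x$j/e - w j) - (x$k/e - w k)\<bar> < 1"
      using v w unfolding inS_def by auto
    then have "\<bar>real_of_int (d j - d k)\<bar> < 2" unfolding d_def by linarith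
    then show ?thesis by linarith
  qed
  let ?N = "int (CARD('n)+1)"
  have m: "(\<Sum>j\<in>UNIV. v j) mod ?N = (\<Sum>j\<in>UNIV. w j) mod ?N"
  proof -
    have "nat ((\<Sum>j\<in>UNIV. v j) mod ?N) = nat ((\<Sum>j\<in>UNIV. w j) mod ?N)"
      using c unfolding col_def by simp
    moreover have "0 \<le> (\<Sum>j\<in>UNIV. v j) mod ?N" "0 \<le> (\<Sum>j\<in>UNIV. w j) mod ?N" by simp_all
    ultimately show ?thesis using eq_nat_nat_iff by blast
  qed
  have S: "(\<Sum>j\<in>UNIV. d j) = (\<Sum>j\<in>UNIV. v j) - (\<Sum>j\<in>UNIV. w j)"
    unfolding d_def by (simp add: sum_subtractf)
  have dv: "?N dvd (\<Sum>j\<in>UNIV. d j)" using m S by (simp add: mod_eq_dvd_iff)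
  have bnd: "\<bar>\<Sum>j\<in>UNIV. d j\<bar> \<le> int (CARD('n))"
  proof -
    have "\<bar>\<Sum>j\<in>UNIV. d j\<bar> \<le> (\<Sum>j\<in>UNIV. \<bar>d j\<bar>)" by (rule sum_abs)
    also have "\<dots> \<le> (\<Sum>j\<in>(UNIV::'n set). 1)" by (intro sum_mono d1)
    finally show ?thesis by simp
  qed
  have S0: "(\<Sum>j\<in>UNIV. d j) = 0"
  proof -
    obtain q where q: "(\<Sum>j\<in>UNIV. d j) = ?N * q" using dv by blast
    have "q = 0"
    proof (rule ccontr)
      assume "q \<noteq> 0"
      then have "\<bar>?N * q\<bar> \<ge> ?N" by (simp add: abs_mult)
      then show False using bnd q by simp
    qed
    then show ?thesis using q by simp
  qed
  have "(\<forall>j. 0 \<le> d j) \<or> (\<forall>j. d j \<le> 0)"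
  proof (rule ccontr)
    assume "\<not> ?thesis"
    then obtain j k where "\<not> 0 \<le> d j" "\<not> d k \<le> 0" by blast
    then have "d j < 0" "d k > 0" by auto
    then show False using d2[of k j] by linarith
  qed
  then have "\<forall>j. d j = 0"
  proof
    assume h: "\<forall>j. 0 \<le> d j"
    then show ?thesis using S0 sum_nonneg_eq_0_iff[of UNIV d] by auto
  next
    assume h: "\<forall>j. d j \<le> 0"
    have "(\<Sum>j\<in>UNIV. - d j) = 0" using S0 by (simp add: sum_negf)
    then show ?thesis using h sum_nonneg_eq_0_iff[of UNIV "\<lambda>j. - d j"] by auto
  qed
  then show ?thesis unfolding d_def by auto
qed

lemma inS_dist:
  fixes x y :: "real^'n" and e :: real
  assumes e: "e > 0" and x: "inS e v x" and y: "inS e v y"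
  shows "dist x y \<le> 2 * CARD('n) * e"
proof -
  have c: "\<bar>(x - y)$j\<bar> \<le> 2 * e" for j
  proof -
    have "\<bar>x$j/e - v j\<bar> < 1" "\<bar>y$j/e - v j\<bar> < 1" using x y unfolding inS_def by auto
    then have h: "\<bar>x$j/e - y$j/e\<bar> \<le> 2" by linarith
    have "x$j - y$j = e * (x$j/e - y$j/e)" using e by (simp add: field_simps)
    then have "\<bar>x$j - y$j\<bar> = e * \<bar>x$j/e - y$j/e\<bar>" using e by (simp add: abs_mult)
    also have "\<dots> \<le> e * 2" using h e by (intro mult_left_mono) auto
    finally show ?thesis by simp
  qed
  have "dist x y = norm (x - y)" by (simp add: dist_norm)
  also have "\<dots> \<le> (\<Sum>j\<in>UNIV. \<bar>(x - y)$j\<bar>)" by (rule norm_le_l1_cart)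
  also have "\<dots> \<le> (\<Sum>j\<in>(UNIV::'n set). 2 * e)" by (rule sum_mono) (rule c)
  also have "\<dots> = real CARD('n) * (2 * e)" by (rule sum_constant)
  also have "\<dots> = 2 * CARD('n) * e" by (simp add: algebra_simps)
  finally show ?thesis .
qed

lemma phi_cont: "e > 0 \<Longrightarrow> continuous_on S (phi e v)"
  unfolding phi_def by (intro continuous_intros) auto

lemma sum_single_nz:
  assumes "finite A" "u \<in> A" "\<And>v. v \<in> A \<Longrightarrow> v \<noteq> u \<Longrightarrow> h v = 0"
  shows "sum h A = h u"
proof -
  have "sum h A = h u + sum h (A - {u})" by (rule sum.remove[OF assms(1,2)])
  also have "sum h (A - {u}) = 0" using assms by (intro sum.neutral) auto
  finally show ?thesis by simp
qed

lemma approx: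
  fixes c :: "real^'n" and r e :: real and f :: "nat \<Rightarrow> real^'n \<Rightarrow> (real^'n) set"
  assumes e: "e > 0" and r_pos: "0 < r"
    and nonempty: "\<And>i x. i \<in> {1..CARD('n) + 1} \<Longrightarrow> x \<in> cball c r \<Longrightarrow> f i x \<noteq> {}"
    and into_ball: "\<And>i x. i \<in> {1..CARD('n) + 1} \<Longrightarrow> x \<in> cball c r \<Longrightarrow> f i x \<subseteq> cball c r"
  shows "\<exists>x\<in>cball c r. \<exists>t a p. (\<forall>i\<in>{1..CARD('n)+1}. 0 \<le> t i \<and> a i \<in> f i (p i) \<and>
     p i \<in> cball c r \<and> a i \<in> cball c r \<and> dist (p i) x \<le> 2 * CARD('n) * e) \<and>
     sum t {1..CARD('n)+1} = 1 \<and> x = (\<Sum>i\<in>{1..CARD('n)+1}. t i *\<^sub>R a i)"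
proof -
  define B where "B = cball c r"
  define I where "I = {1..CARD('n)+1}"
  define K where "K = \<lceil>(norm c + r)/e\<rceil> + 1"
  define V where "V = {v::'n\<Rightarrow>int. \<forall>j. v j \<in> {-K..K}}"
  have finV: "finite V"
  proof -
    have "V = Pi UNIV (\<lambda>_. {-K..K})" unfolding V_def Pi_def by simp
    also have "\<dots> = PiE UNIV (\<lambda>_. {-K..K})" by (rule PiE_UNIV_domain[symmetric])
    finally show ?thesis by (simp add: finite_PiE)
  qed
  have colI: "col v \<in> I" for v :: "'n \<Rightarrow> int" unfolding I_def by (rule col_range)
  have floorV: "(\<lambda>j. \<lfloor>x$j/e\<rfloor>) \<in> V" if "x \<in> B" for x
  proof -
    have "\<forall>j. \<lfloor>x$j/e\<rfloor> \<in> {-K..K}"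
    proof
      fix j
      have "norm x - norm c \<le> norm (x - c)" by (rule norm_triangle_ineq2)
      moreover have "norm (x - c) \<le> r" using that unfolding B_def by (simp add: dist_norm norm_minus_commute)
      moreover have "\<bar>x$j\<bar> \<le> norm x" by (rule component_le_norm_cart)
      ultimately have h: "\<bar>x$j\<bar> \<le> norm c + r" by linarith
      have "\<bar>x$j\<bar>/e \<le> (norm c + r)/e" using h e by (simp add: divide_right_mono)
      then have h2: "\<bar>x$j/e\<bar> \<le> (norm c + r)/e" using e by simp
      have h3: "(norm c + r)/e \<le> of_int \<lceil>(norm c + r)/e\<rceil>" by (rule le_of_int_ceiling)
      have "of_int (-K) \<le> x$j/e - 1" using h2 h3 unfolding K_def by linarith
      then have "-K \<le> \<lfloor>x$j/e\<rfloor>" by (simp add: le_floor_iff)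
      moreover have "\<lfloor>x$j/e\<rfloor> \<le> K"
      proof -
        have "x$j/e \<le> of_int K" using h2 h3 unfolding K_def by linarith
        then show ?thesis by (simp add: floor_le_iff)
      qed
      ultimately show "\<lfloor>x$j/e\<rfloor> \<in> {-K..K}" by simp
    qed
    then show ?thesis unfolding V_def by simp
  qed
  define Phi where "Phi x = (\<Sum>v\<in>V. phi e v x)" for x
  have Phipos: "Phi x > 0" if "x \<in> B" for x
  proof -
    have "0 < phi e (\<lambda>j. \<lfloor>x$j/e\<rfloor>) x" using inS_floor[OF e, of x] by (simp add: phi_pos)
    also have "\<dots> \<le> Phi x" unfolding Phi_def
      by (rule member_le_sum[OF floorV[OF that]]) (simp_all add: phi_nonneg finV)
    finally show ?thesis .
  qed
  define P where "P v = (SOME p. p \<in> B \<and> inS e v p)" for v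
  define Y where "Y v = (if \<exists>p\<in>B. inS e v p then (SOME y. y \<in> f (col v) (P v)) else c)" for v
  have Yfacts: "P v \<in> B \<and> inS e v (P v) \<and> Y v \<in> f (col v) (P v)" if "\<exists>p\<in>B. inS e v p" for v
  proof -
    have P: "P v \<in> B \<and> inS e v (P v)" unfolding P_def using that someI_ex[of "\<lambda>p. p \<in> B \<and> inS e v p"] by blast
    then have "f (col v) (P v) \<noteq> {}" using nonempty colI unfolding B_def I_def by blast
    then have "Y v \<in> f (col v) (P v)" unfolding Y_def using that by (simp add: some_in_eq)
    with P show ?thesis by blast
  qed
  have YB: "Y v \<in> B" for v
  proof (cases "\<exists>p\<in>B. inS e v p")
    case True
    then show ?thesis using Yfacts[OF True] into_ball colI unfolding B_def I_def by blast
  next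
    case False
    then show ?thesis unfolding Y_def B_def using r_pos by simp
  qed
  define g where "g x = (\<Sum>v\<in>V. (phi e v x / Phi x) *\<^sub>R Y v)" for x
  have contg: "continuous_on B g"
  proof -
    have Phine: "\<forall>x\<in>B. (\<Sum>v\<in>V. phi e v x) \<noteq> 0" using Phipos unfolding Phi_def by (metis less_irrefl)
    show ?thesis unfolding g_def Phi_def by (intro continuous_intros phi_cont[OF e]) (use Phine in blast)
  qed
  have gB: "g \<in> B \<rightarrow> B"
  proof
    fix x assume x: "x \<in> B"
    have "(\<Sum>v\<in>V. phi e v x / Phi x) = 1"
      using Phipos[OF x] by (simp add: sum_divide_distrib[symmetric] Phi_def)
    then show "g x \<in> B" unfolding g_def
      using Phipos[OF x] YB
      by (intro convex_sum finV) (auto simp: B_def phi_nonneg)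
  qed
  obtain x where xB: "x \<in> B" and fx: "g x = x"
  proof -
    have "compact B" "convex B" "B \<noteq> {}" unfolding B_def using r_pos by auto
    then show ?thesis using brouwer[of B g] contg gB that by blast
  qed
  define W where "W v = phi e v x / Phi x" for v
  have Wnn: "0 \<le> W v" for v unfolding W_def using Phipos[OF xB] phi_nonneg[of e v x] by simp
  have W0: "W v = 0" if "\<not> inS e v x" for v
    unfolding W_def using phi_pos[of e v x] phi_nonneg[of e v x] that by simp
  define t where "t i = (\<Sum>v\<in>{v\<in>V. col v = i}. W v)" for i
  define Act where "Act i = (\<exists>v\<in>V. col v = i \<and> inS e v x)" for i
  define vi where "vi i = (SOME v. v\<in>V \<and> col v = i \<and> inS e v x)" for i
  define a where "a i = (if Act i then Y (vi i) else (SOME y. y \<in> f i x))" for i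
  define p where "p i = (if Act i then P (vi i) else x)" for i
  have vi: "vi i \<in> V \<and> col (vi i) = i \<and> inS e (vi i) x" if "Act i" for i
    using that someI_ex[of "\<lambda>v. v\<in>V \<and> col v = i \<and> inS e v x"] unfolding Act_def vi_def by blast
  have vuniq: "v = vi i" if "Act i" "v \<in> V" "col v = i" "inS e v x" for v i
    using vi[OF that(1)] that inS_unique[of e v x "vi i"] by simp
  have per: "(\<Sum>v\<in>{v\<in>V. col v = i}. W v *\<^sub>R Y v) = t i *\<^sub>R a i" for i
  proof (cases "Act i")
    case True
    have fin: "finite {v\<in>V. col v = i}" using finV by simp
    have m: "vi i \<in> {v\<in>V. col v = i}" using vi[OF True] by simp
    have Wz: "W v = 0" if "v\<in>{v\<in>V. col v = i}" "v \<noteq> vi i" for v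
      using vuniq[OF True, of v] W0[of v] that by blast
    have "(\<Sum>v\<in>{v\<in>V. col v = i}. W v *\<^sub>R Y v) = W (vi i) *\<^sub>R Y (vi i)"
      by (rule sum_single_nz[OF fin m]) (simp add: Wz)
    moreover have "t i = W (vi i)" unfolding t_def
      by (rule sum_single_nz[OF fin m]) (simp add: Wz)
    ultimately show ?thesis using True unfolding a_def by simp
  next
    case False
    then have "\<And>v. v \<in> {v\<in>V. col v = i} \<Longrightarrow> W v = 0" using W0 unfolding Act_def by auto
    then show ?thesis unfolding t_def by simp
  qed
  have sumW: "(\<Sum>v\<in>V. W v) = 1"
    unfolding W_def using Phipos[OF xB] by (simp add: sum_divide_distrib[symmetric] Phi_def)
  have colV: "col ` V \<subseteq> I" using colI by auto
  have finI: "finite I" unfolding I_def by simp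
  have "x = (\<Sum>v\<in>V. W v *\<^sub>R Y v)" using fx unfolding g_def W_def by simp
  also have "\<dots> = (\<Sum>i\<in>I. \<Sum>v\<in>{v\<in>V. col v = i}. W v *\<^sub>R Y v)"
    using sum.group[OF finV finI colV, of "\<lambda>v. W v *\<^sub>R Y v"] by simp
  also have "\<dots> = (\<Sum>i\<in>I. t i *\<^sub>R a i)" using per by simp
  finally have xeq: "x = (\<Sum>i\<in>I. t i *\<^sub>R a i)" .
  have tsum: "sum t I = 1"
    using sum.group[OF finV finI colV, of W] sumW unfolding t_def by simp
  have props: "0 \<le> t i \<and> a i \<in> f i (p i) \<and> p i \<in> B \<and> a i \<in> B \<and> dist (p i) x \<le> 2 * CARD('n) * e"
    if i: "i \<in> I" for i
  proof (cases "Act i")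
    case True
    note v = vi[OF True]
    have ex: "\<exists>p\<in>B. inS e (vi i) p" using v xB by blast
    note Y = Yfacts[OF ex]
    have a1: "a i \<in> f i (p i)" using True Y v unfolding a_def p_def by simp
    have p1: "p i \<in> B" using True Y unfolding p_def by simp
    have d: "dist (p i) x \<le> 2 * CARD('n) * e"
      using True Y v inS_dist[OF e, of "vi i" "P (vi i)" x] unfolding p_def by simp
    have t0: "0 \<le> t i" unfolding t_def by (intro sum_nonneg) (simp add: Wnn)
    have "f i (p i) \<subseteq> B" using into_ball[of i "p i"] i p1 unfolding B_def I_def by blast
    then show ?thesis using a1 p1 d t0 by blast
  next
    case False
    have ne: "f i x \<noteq> {}" using nonempty i xB unfolding B_def I_def by blast
    have a1: "a i \<in> f i (p i)" using False ne unfolding a_def p_def by (simp add: some_in_eq)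
    have t0: "0 \<le> t i" unfolding t_def by (intro sum_nonneg) (simp add: Wnn)
    have p1: "p i = x" using False unfolding p_def by simp
    have "f i x \<subseteq> B" using into_ball[of i x] i xB unfolding B_def I_def by blast
    then show ?thesis using a1 p1 xB t0 e by auto
  qed
  have "\<forall>i\<in>I. 0 \<le> t i \<and> a i \<in> f i (p i) \<and> p i \<in> B \<and> a i \<in> B \<and> dist (p i) x \<le> 2 * CARD('n) * e"
    using props by blast
  then show ?thesis
    using xB tsum xeq unfolding B_def I_def by (intro bexI[of _ x] exI[of _ t] exI[of _ a] exI[of _ p]) auto
qed


lemma finite_subseq:
  fixes s :: "'i \<Rightarrow> nat \<Rightarrow> 'a::metric_space"
  assumes "finite I" "compact K" "\<And>i m. i \<in> I \<Longrightarrow> s i m \<in> K"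
  shows "\<exists>r l. strict_mono r \<and> (\<forall>i\<in>I. l i \<in> K \<and> (\<lambda>m. s i (r m)) \<longlonglongrightarrow> l i)"
  using assms(1,3)
proof (induction I rule: finite_induct)
  case empty
  have "strict_mono (\<lambda>m::nat. m)" by (simp add: strict_mono_def)
  then show ?case by (intro exI[of _ "\<lambda>m. m"] exI[of _ "\<lambda>_. undefined"] conjI) auto
next
  case (insert j I)
  have "\<And>i m. i \<in> I \<Longrightarrow> s i m \<in> K" using insert.prems by simp
  then have "\<exists>r l. strict_mono r \<and> (\<forall>i\<in>I. l i \<in> K \<and> (\<lambda>m. s i (r m)) \<longlonglongrightarrow> l i)"
    by (rule insert.IH)
  then obtain r l where r: "strict_mono r" and l: "\<forall>i\<in>I. l i \<in> K \<and> (\<lambda>m. s i (r m)) \<longlonglongrightarrow> l i"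
    by (elim exE conjE)
  have "\<forall>m. s j (r m) \<in> K" using insert.prems by simp
  then obtain l2 r2 where l2: "l2 \<in> K" "strict_mono r2" "((\<lambda>m. s j (r m)) \<circ> r2) \<longlonglongrightarrow> l2"
    by (rule seq_compactE[OF compact_imp_seq_compact[OF assms(2)]])
  have sm: "strict_mono (r \<circ> r2)" using r l2(2) by (rule strict_mono_o)
  have "\<forall>i\<in>insert j I. (l(j := l2)) i \<in> K \<and> (\<lambda>m. s i ((r \<circ> r2) m)) \<longlonglongrightarrow> (l(j := l2)) i"
  proof
    fix i assume i: "i \<in> insert j I"
    show "(l(j := l2)) i \<in> K \<and> (\<lambda>m. s i ((r \<circ> r2) m)) \<longlonglongrightarrow> (l(j := l2)) i"
    proof (cases "i = j")
      case True
      then show ?thesis using l2 by (simp add: o_def)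
    next
      case False
      then have iI: "i \<in> I" using i by simp
      have "((\<lambda>m. s i (r m)) \<circ> r2) \<longlonglongrightarrow> l i" using l iI l2(2) by (intro LIMSEQ_subseq_LIMSEQ) auto
      then show ?thesis using False l iI by (simp add: o_def)
    qed
  qed
  then show ?case using sm by (intro exI[of _ "r \<circ> r2"] exI[of _ "l(j := l2)"] conjI)
qed

theorem theorem5p4:
  fixes c :: "real ^ 'n" and r :: real
    and f :: "nat \<Rightarrow> real ^ 'n \<Rightarrow> (real ^ 'n) set"
  assumes r_pos: "0 < r"
    and nonempty: "\<And>i x. i \<in> {1..CARD('n) + 1} \<Longrightarrow> x \<in> cball c r \<Longrightarrow> f i x \<noteq> {}"
    and into_ball: "\<And>i x. i \<in> {1..CARD('n) + 1} \<Longrightarrow> x \<in> cball c r \<Longrightarrow> f i x \<subseteq> cball c r"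
    and closed_graph: "\<And>i. i \<in> {1..CARD('n) + 1} \<Longrightarrow>
        closedin (top_of_set (cball c r \<times> cball c r))
          {(x, y). x \<in> cball c r \<and> y \<in> cball c r \<and> y \<in> f i x}"
  shows "\<exists>x\<in>cball c r. x \<in> geom_join {1..CARD('n) + 1} (\<lambda>i. f i x)"
proof -
  define I where "I = {1..CARD('n)+1}"
  define B where "B = cball c r"
  define E where "E m = inverse (real (Suc m))" for m
  have E: "E m > 0" for m unfolding E_def by simp
  define R where "R m x t a p \<longleftrightarrow> x \<in> B \<and> (\<forall>i\<in>I. 0 \<le> t i \<and> a i \<in> f i (p i) \<and>
     p i \<in> B \<and> a i \<in> B \<and> dist (p i) x \<le> 2 * CARD('n) * E m) \<and>
     sum t I = 1 \<and> x = (\<Sum>i\<in>I. t i *\<^sub>R a i)"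
    for m x and t :: "nat \<Rightarrow> real" and a p :: "nat \<Rightarrow> real^'n"
  have ex: "\<forall>m. \<exists>x t a p. R m x t a p"
  proof
    fix m
    have "\<exists>x\<in>B. \<exists>t a p. (\<forall>i\<in>I. 0 \<le> t i \<and> a i \<in> f i (p i) \<and>
       p i \<in> B \<and> a i \<in> B \<and> dist (p i) x \<le> 2 * CARD('n) * E m) \<and>
       sum t I = 1 \<and> x = (\<Sum>i\<in>I. t i *\<^sub>R a i)"
      unfolding B_def I_def by (rule approx[OF E r_pos, where f=f]) (rule nonempty, assumption+, rule into_ball, assumption+)
    then show "\<exists>x t a p. R m x t a p" unfolding R_def by blast
  qed
  from ex have "\<exists>X. \<forall>m. \<exists>t a p. R m (X m) t a p" by (rule choice)
  then obtain X where X: "\<forall>m. \<exists>t a p. R m (X m) t a p" ..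
  from X have "\<exists>T. \<forall>m. \<exists>a p. R m (X m) (T m) a p" by (rule choice)
  then obtain T where T: "\<forall>m. \<exists>a p. R m (X m) (T m) a p" ..
  from T have "\<exists>A. \<forall>m. \<exists>p. R m (X m) (T m) (A m) p" by (rule choice)
  then obtain A where A: "\<forall>m. \<exists>p. R m (X m) (T m) (A m) p" ..
  from A have "\<exists>P. \<forall>m. R m (X m) (T m) (A m) (P m)" by (rule choice)
  then obtain P where P: "\<forall>m. R m (X m) (T m) (A m) (P m)" ..
  have XT: "\<And>m. X m \<in> B" "\<And>m. sum (T m) I = 1"
     "\<And>m. X m = (\<Sum>i\<in>I. T m i *\<^sub>R A m i)"
    using P unfolding R_def by blast+
  have XT2: "\<And>m i. i \<in> I \<Longrightarrow> 0 \<le> T m i \<and> A m i \<in> f i (P m i) \<and>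
     P m i \<in> B \<and> A m i \<in> B \<and> dist (P m i) (X m) \<le> 2 * CARD('n) * E m"
    using P unfolding R_def by blast
  have finI: "finite I" unfolding I_def by simp
  have cB: "compact B" unfolding B_def by simp
  have T01: "T m i \<in> {0..1}" if "i \<in> I" for m i
  proof -
    have "T m i \<le> sum (T m) I" using XT2 that finI by (intro member_le_sum) auto
    then show ?thesis using XT(2)[of m] XT2[OF that, of m] by simp
  qed
  have Ain: "\<And>i m. i \<in> I \<Longrightarrow> A m i \<in> B" using XT2 by blast
  have "\<exists>r l. strict_mono r \<and> (\<forall>i\<in>I. l i \<in> B \<and> (\<lambda>m. A (r m) i) \<longlonglongrightarrow> l i)"
    by (rule finite_subseq[where s="\<lambda>i m. A m i", OF finI cB]) (rule Ain)
  then
  obtain r1 la where r1: "strict_mono r1" and la: "\<forall>i\<in>I. la i \<in> B \<and> (\<lambda>m. A (r1 m) i) \<longlonglongrightarrow> la i"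
    by (elim exE conjE)
  have Tin: "\<And>i m. i \<in> I \<Longrightarrow> T (r1 m) i \<in> {0..1}" using T01 by blast
  have "\<exists>r l. strict_mono r \<and> (\<forall>i\<in>I. l i \<in> {0..1} \<and> (\<lambda>m. T (r1 (r m)) i) \<longlonglongrightarrow> l i)"
    by (rule finite_subseq[where s="\<lambda>i m. T (r1 m) i", OF finI compact_Icc]) (rule Tin)
  then
  obtain r2 lt where r2: "strict_mono r2" and lt: "\<forall>i\<in>I. lt i \<in> {0..1} \<and> (\<lambda>m. T (r1 (r2 m)) i) \<longlonglongrightarrow> lt i"
    by (elim exE conjE)
  have "\<forall>m. X (r1 (r2 m)) \<in> B" using XT(1) by blast
  then obtain lx r3 where lx: "lx \<in> B" "strict_mono r3" "((\<lambda>m. X (r1 (r2 m))) \<circ> r3) \<longlonglongrightarrow> lx"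
    by (rule seq_compactE[OF compact_imp_seq_compact[OF cB]])
  define q where "q m = r1 (r2 (r3 m))" for m
  have q: "strict_mono q" unfolding q_def using strict_mono_o[OF r1 strict_mono_o[OF r2 lx(2)]] by (simp add: o_def)
  have Xq: "(\<lambda>m. X (q m)) \<longlonglongrightarrow> lx" using lx(3) unfolding q_def by (simp add: o_def)
  have Aq: "(\<lambda>m. A (q m) i) \<longlonglongrightarrow> la i" if "i \<in> I" for i
  proof -
    have "((\<lambda>m. A (r1 m) i) \<circ> (r2 \<circ> r3)) \<longlonglongrightarrow> la i"
      using la that strict_mono_o[OF r2 lx(2)] by (intro LIMSEQ_subseq_LIMSEQ) auto
    then show ?thesis unfolding q_def by (simp add: o_def)
  qed
  have Tq: "(\<lambda>m. T (q m) i) \<longlonglongrightarrow> lt i" if "i \<in> I" for i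
  proof -
    have "((\<lambda>m. T (r1 (r2 m)) i) \<circ> r3) \<longlonglongrightarrow> lt i"
      using lt that lx(2) by (intro LIMSEQ_subseq_LIMSEQ) auto
    then show ?thesis unfolding q_def by (simp add: o_def)
  qed
  have Eq: "(\<lambda>m. 2 * CARD('n) * E (q m)) \<longlonglongrightarrow> 0"
  proof -
    have "((\<lambda>m. inverse (real (Suc m))) \<circ> q) \<longlonglongrightarrow> 0"
      by (rule LIMSEQ_subseq_LIMSEQ[OF LIMSEQ_inverse_real_of_nat q])
    then have "(\<lambda>m. E (q m)) \<longlonglongrightarrow> 0" unfolding E_def by (simp add: o_def)
    then show ?thesis by (rule tendsto_mult_right_zero)
  qed
  have Pq: "(\<lambda>m. P (q m) i) \<longlonglongrightarrow> lx" if i: "i \<in> I" for i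
  proof -
    have dm: "dist (P (q m) i) (X (q m)) \<le> 2 * real CARD('n) * E (q m)" for m
      using XT2[OF i, of "q m", THEN conjunct2, THEN conjunct2, THEN conjunct2, THEN conjunct2] by simp
    have d1: "(\<lambda>m. dist (P (q m) i) (X (q m))) \<longlonglongrightarrow> 0"
      by (rule Lim_null_comparison[OF always_eventually Eq]) (simp add: dm)
    have d2: "(\<lambda>m. dist (X (q m)) lx) \<longlonglongrightarrow> 0" by (rule tendsto_dist_iff[THEN iffD1, OF Xq])
    have "(\<lambda>m. dist (P (q m) i) lx) \<longlonglongrightarrow> 0"
    proof (rule Lim_null_comparison[OF always_eventually])
      show "\<forall>m. norm (dist (P (q m) i) lx) \<le> dist (P (q m) i) (X (q m)) + dist (X (q m)) lx"
        by (simp add: dist_triangle)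
      show "(\<lambda>m. dist (P (q m) i) (X (q m)) + dist (X (q m)) lx) \<longlonglongrightarrow> 0"
        using tendsto_add[OF d1 d2] by simp
    qed
    then show ?thesis by (rule tendsto_dist_iff[THEN iffD2])
  qed
  have laf: "la i \<in> f i lx" if i: "i \<in> I" for i
  proof -
    have cl: "closed {(x, y). x \<in> B \<and> y \<in> B \<and> y \<in> f i x}"
      using closedin_closed_trans[OF closed_graph[of i]] i unfolding B_def I_def by (simp add: closed_Times)
    have "(lx, la i) \<in> {(x, y). x \<in> B \<and> y \<in> B \<and> y \<in> f i x}"
      by (rule closed_sequentially[OF cl, of "\<lambda>m. (P (q m) i, A (q m) i)"])
        (use XT2[OF i] Pq[OF i] Aq[OF i] in \<open>auto intro: tendsto_Pair\<close>)
    then show ?thesis by simp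
  qed
  have s1: "sum lt I = 1"
  proof -
    have "(\<lambda>m. sum (T (q m)) I) \<longlonglongrightarrow> sum lt I" using Tq by (intro tendsto_sum) auto
    moreover have "(\<lambda>m. sum (T (q m)) I) = (\<lambda>m. 1)" using XT(2) by simp
    ultimately have "(\<lambda>m. 1::real) \<longlonglongrightarrow> sum lt I" by simp
    then show ?thesis by (rule LIMSEQ_unique[OF _ tendsto_const])
  qed
  have s2: "lx = (\<Sum>i\<in>I. lt i *\<^sub>R la i)"
  proof -
    have "(\<lambda>m. (\<Sum>i\<in>I. T (q m) i *\<^sub>R A (q m) i)) \<longlonglongrightarrow> (\<Sum>i\<in>I. lt i *\<^sub>R la i)"
      using Tq Aq by (intro tendsto_sum tendsto_scaleR) auto
    moreover have "(\<lambda>m. (\<Sum>i\<in>I. T (q m) i *\<^sub>R A (q m) i)) = (\<lambda>m. X (q m))" using XT(3) by simp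
    ultimately have "(\<lambda>m. X (q m)) \<longlonglongrightarrow> (\<Sum>i\<in>I. lt i *\<^sub>R la i)" by simp
    then show ?thesis using LIMSEQ_unique[OF Xq] by blast
  qed
  have "lx \<in> geom_join I (\<lambda>i. f i lx)"
    unfolding geom_join_def mem_Collect_eq
    by (rule exI[of _ lt], rule exI[of _ la]) (use lt laf s1 s2 in auto)
  then show ?thesis using lx(1) unfolding B_def I_def by blast
qed

end
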